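(* Let $\mathbf{P}$ be the transition matrix of a Markov chain on a finite state space $V$, let $L\ge0$, $\ell=2^L$, $w_0\in V$, and let $\rho\ge 1$ be an integer. Maintain sequences whose entries are indexed by times in $\{0,1,\dots,\ell\}$. Initially $W_1$ has entry $w_0$ at time $0$ and entry $w_\ell\sim\mathbf{P}^\ell[w_0,\cdot]$ at time $\ell$. At level $i=1,\dots,L$, with $\delta=\ell/2^{i-1}$, the current sequence $W_i$ has entries at times $0,\delta,2\delta,\dots,\ell_i$ for some $\ell_i\le \ell$; between every pair of consecutive entries $x$ (at time $s$) and $x'$ (at time $s+\delta$) insert, at time $s+\delta/2$, a vertex $y$ drawn (conditionally independently given the past) with probability $\mathbf{P}^{\delta/2}[x,y]\mathbf{P}^{\delta/2}[y,x']/\mathbf{P}^{\delta}[x,x']$; then, if the resulting sequence contains at least $\rho$ distinct vertices, delete all entries at times after the first entry at which the $\rho$-th distinct vertex appears. Call the result $W_{i+1}$. Then $W_{L+1}$ has the same distribution as $(X_0,X_1,\dots,X_\tau)$, where $(X_t)$ is the Markov chain with transition matrix $\mathbf{P}$ started at $w_0$ and $\tau$ is the minimum of $\ell$ and the first time $t$ at which $\{X_0,\dots,X_t\}$ contains $\rho$ distinct vertices. *)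

theory Defs
  imports "HOL-Probability.Probability"
begin

text \<open>A Markov chain on the finite state space given by the finite type 'a is
described by its transition kernel P :: 'a \<Rightarrow> 'a pmf, i.e. the row x of the
transition matrix is the distribution P x, so that the matrix entry P[x,y] is pmf (P x) y.\<close>

primrec kpow :: "('a \<Rightarrow> 'a pmf) \<Rightarrow> nat \<Rightarrow> 'a \<Rightarrow> 'a pmf" where
  "kpow P 0 x = return_pmf x"
| "kpow P (Suc n) x = bind_pmf (P x) (kpow P n)"

definition mpow :: "('a \<Rightarrow> 'a pmf) \<Rightarrow> nat \<Rightarrow> 'a \<Rightarrow> 'a \<Rightarrow> real" where
  "mpow P n x y = pmf (kpow P n x) y"

text \<open>Bridge distribution of the midpoint: y with probability
  P^(d/2)[x,y] P^(d/2)[y,x'] / P^d[x,x'] (only meaningful when P^d[x,x'] > 0;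
  otherwise an arbitrary convention, this case occurs with probability zero).\<close>
definition bridge :: "('a \<Rightarrow> 'a pmf) \<Rightarrow> nat \<Rightarrow> 'a \<Rightarrow> 'a \<Rightarrow> 'a pmf" where
  "bridge P d x x' =
     (if mpow P d x x' > 0
      then embed_pmf (\<lambda>y. mpow P (d div 2) x y * mpow P (d div 2) y x' / mpow P d x x')
      else return_pmf x)"

fun refine :: "('a \<Rightarrow> 'a pmf) \<Rightarrow> nat \<Rightarrow> 'a list \<Rightarrow> 'a list pmf" where
  "refine P d [] = return_pmf []"
| "refine P d [x] = return_pmf [x]"
| "refine P d (x # x' # xs) =
     bind_pmf (bridge P d x x') (\<lambda>y.
     bind_pmf (refine P d (x' # xs)) (\<lambda>rest. return_pmf (x # y # rest)))"

definition trunc :: "nat \<Rightarrow> 'a list \<Rightarrow> 'a list" where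
  "trunc \<rho> xs =
     (if \<rho> \<le> card (set xs)
      then take (Suc (LEAST k. \<rho> \<le> card (set (take (Suc k) xs)))) xs
      else xs)"

text \<open>Distribution of W_(k+1) (k = 0, ..., L), with \<ell> = 2^L.
  Level i = k+1 uses spacing \<delta> = \<ell> / 2^(i-1) = 2^L div 2^k.\<close>
primrec alg :: "('a \<Rightarrow> 'a pmf) \<Rightarrow> nat \<Rightarrow> nat \<Rightarrow> 'a \<Rightarrow> nat \<Rightarrow> 'a list pmf" where
  "alg P \<rho> L w0 0 =
     map_pmf (\<lambda>wl. trunc \<rho> [w0, wl]) (kpow P (2 ^ L) w0)"
| "alg P \<rho> L w0 (Suc k) =
     bind_pmf (alg P \<rho> L w0 k) (\<lambda>W. map_pmf (trunc \<rho>) (refine P (2 ^ L div 2 ^ k) W))"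

primrec traj :: "('a \<Rightarrow> 'a pmf) \<Rightarrow> nat \<Rightarrow> 'a \<Rightarrow> 'a list pmf" where
  "traj P 0 w = return_pmf [w]"
| "traj P (Suc n) w = bind_pmf (P w) (\<lambda>w'. map_pmf (\<lambda>xs. w # xs) (traj P n w'))"

definition tau :: "nat \<Rightarrow> nat \<Rightarrow> 'a list \<Rightarrow> nat" where
  "tau l \<rho> xs =
     (if \<exists>t\<le>l. \<rho> \<le> card (set (take (Suc t) xs))
      then min l (LEAST t. \<rho> \<le> card (set (take (Suc t) xs)))
      else l)"

end

theory Submission imports Defs begin

lemma pmf_bind_fin:
  fixes M :: "'a::finite pmf"
  shows "pmf (bind_pmf M f) x = (\<Sum>y\<in>UNIV. pmf M y * pmf (f y) x)"
  unfolding pmf_bind by (subst integral_measure_pmf[of UNIV]) (auto simp: mult.commute)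

lemma kpow_add: "kpow P (a + b) x = bind_pmf (kpow P a x) (kpow P b)"
proof (induction a arbitrary: x)
  case (Suc a)
  have "kpow P (a + b) = (\<lambda>x. bind_pmf (kpow P a x) (kpow P b))" using Suc.IH by (rule ext)
  then show ?case by (simp add: bind_assoc_pmf)
qed (simp add: bind_return_pmf)

lemma sum_set_conj [simp]: "sum f {x. x = b \<and> Q} = (if Q then f b else 0)"
  by auto

lemma mpow_CK:
  fixes P :: "'a::finite \<Rightarrow> 'a pmf"
  shows "mpow P (2*e) w b = (\<Sum>y\<in>UNIV. mpow P e w y * mpow P e y b)"
  unfolding mpow_def mult_2 kpow_add pmf_bind_fin ..

lemma mpow_nonneg: "mpow P n x y \<ge> 0" by (simp add: mpow_def)

lemma pmf_bridge:
  fixes P :: "'a::finite \<Rightarrow> 'a pmf"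
  assumes "mpow P (2*e) w b > 0"
  shows "pmf (bridge P (2*e) w b) a = mpow P e w a * mpow P e a b / mpow P (2*e) w b"
proof -
  have nn: "\<And>y. 0 \<le> mpow P e w y * mpow P e y b / mpow P (2*e) w b"
    using assms by (simp add: mpow_nonneg)
  have "(\<integral>\<^sup>+y. ennreal (mpow P e w y * mpow P e y b / mpow P (2*e) w b) \<partial>count_space UNIV)
     = ennreal (\<Sum>y\<in>UNIV. mpow P e w y * mpow P e y b / mpow P (2*e) w b)"
    by (subst nn_integral_count_space_finite) (auto simp: sum_ennreal nn)
  also have "(\<Sum>y\<in>UNIV. mpow P e w y * mpow P e y b / mpow P (2*e) w b) = 1"
    using assms by (simp add: sum_divide_distrib[symmetric] mpow_CK[symmetric])
  finally show ?thesis using assms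
    by (simp add: bridge_def pmf_embed_pmf nn)
qed

lemma bridge_joint:
  fixes P :: "'a::finite \<Rightarrow> 'a pmf"
  shows "bind_pmf (kpow P e w) (\<lambda>y. bind_pmf (kpow P e y) (\<lambda>w'. return_pmf (y, w')))
       = bind_pmf (kpow P (2*e) w) (\<lambda>w'. bind_pmf (bridge P (2*e) w w') (\<lambda>y. return_pmf (y, w')))"
proof (rule pmf_eqI)
  fix ab :: "'a \<times> 'a"
  obtain a b where ab: "ab = (a, b)" by force
  have L: "pmf (bind_pmf (kpow P e w) (\<lambda>y. bind_pmf (kpow P e y) (\<lambda>w'. return_pmf (y, w')))) ab
      = mpow P e w a * mpow P e a b"
    unfolding ab pmf_bind_fin pmf_return mpow_def
    by (simp add: indicator_def if_distrib sum.delta cong: if_cong)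
  have R: "pmf (bind_pmf (kpow P (2*e) w) (\<lambda>w'. bind_pmf (bridge P (2*e) w w') (\<lambda>y. return_pmf (y, w')))) ab
      = mpow P (2*e) w b * pmf (bridge P (2*e) w b) a"
    unfolding ab pmf_bind_fin pmf_return mpow_def
    by (simp add: indicator_def if_distrib sum.delta cong: if_cong)
  show "pmf (bind_pmf (kpow P e w) (\<lambda>y. bind_pmf (kpow P e y) (\<lambda>w'. return_pmf (y, w')))) ab =
        pmf (bind_pmf (kpow P (2*e) w) (\<lambda>w'. bind_pmf (bridge P (2*e) w w') (\<lambda>y. return_pmf (y, w')))) ab"
  proof (cases "mpow P (2*e) w b > 0")
    case True
    then show ?thesis unfolding L R by (simp add: pmf_bridge)
  next
    case False
    hence z: "mpow P (2*e) w b = 0" using mpow_nonneg[of P "2*e" w b] by linarith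
    hence "(\<Sum>y\<in>UNIV. mpow P e w y * mpow P e y b) = 0" by (simp add: mpow_CK)
    hence "mpow P e w a * mpow P e a b = 0"
      by (subst (asm) sum_nonneg_eq_0_iff) (auto simp: mpow_nonneg)
    then show ?thesis unfolding L R z by simp
  qed
qed

lemma bridge_swap:
  fixes P :: "'a::finite \<Rightarrow> 'a pmf"
  shows "bind_pmf (kpow P e w) (\<lambda>y. bind_pmf (kpow P e y) (g y))
       = bind_pmf (kpow P (2*e) w) (\<lambda>w'. bind_pmf (bridge P (2*e) w w') (\<lambda>y. g y w'))"
proof -
  have "bind_pmf (kpow P e w) (\<lambda>y. bind_pmf (kpow P e y) (g y)) =
     bind_pmf (bind_pmf (kpow P e w) (\<lambda>y. bind_pmf (kpow P e y) (\<lambda>w'. return_pmf (y, w')))) (\<lambda>(y,w'). g y w')"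
    by (simp add: bind_assoc_pmf bind_return_pmf)
  also have "\<dots> = bind_pmf (bind_pmf (kpow P (2*e) w) (\<lambda>w'. bind_pmf (bridge P (2*e) w w') (\<lambda>y. return_pmf (y, w')))) (\<lambda>(y,w'). g y w')"
    by (simp only: bridge_joint)
  also have "\<dots> = bind_pmf (kpow P (2*e) w) (\<lambda>w'. bind_pmf (bridge P (2*e) w w') (\<lambda>y. g y w'))"
    by (simp add: bind_assoc_pmf bind_return_pmf)
  finally show ?thesis .
qed

primrec samp :: "('a \<Rightarrow> 'a pmf) \<Rightarrow> nat \<Rightarrow> nat \<Rightarrow> 'a \<Rightarrow> 'a list pmf" where
  "samp P d 0 w = return_pmf [w]"
| "samp P d (Suc n) w = bind_pmf (kpow P d w) (\<lambda>w'. map_pmf (Cons w) (samp P d n w'))"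

lemma samp_set: "V \<in> set_pmf (samp P d n w) \<Longrightarrow> \<exists>V'. V = w # V'"
  by (induction n arbitrary: w V) auto

lemma refine_set:
  "R \<in> set_pmf (refine P d W) \<Longrightarrow> W \<noteq> [] \<Longrightarrow> R \<noteq> [] \<and> hd R = hd W \<and> set W \<subseteq> set R"
proof (induction P d W arbitrary: R rule: refine.induct)
  case (3 P d x x' xs)
  then obtain y r where "y \<in> set_pmf (bridge P d x x')" "r \<in> set_pmf (refine P d (x' # xs))" "R = x # y # r" by auto
  with 3(1)[of y r] show ?case by auto
qed auto

lemma refine_split:
  "refine P d (xs @ x # ys) =
     bind_pmf (refine P d (xs @ [x])) (\<lambda>R. map_pmf (\<lambda>R'. R @ tl R') (refine P d (x # ys)))"
proof (induction xs)
  case Nil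
  have "map_pmf (\<lambda>R'. [x] @ tl R') (refine P d (x # ys)) = map_pmf id (refine P d (x # ys))"
    by (rule map_pmf_cong) (auto dest!: refine_set simp: neq_Nil_conv)
  then show ?case by (simp add: bind_return_pmf)
next
  case (Cons a xs)
  show ?case
  proof (cases xs)
    case Nil
    have "bind_pmf (bridge P d a x) (\<lambda>y. bind_pmf (refine P d (x # ys)) (\<lambda>rest. return_pmf (a # y # rest)))
        = bind_pmf (bridge P d a x) (\<lambda>y. bind_pmf (refine P d (x # ys)) (\<lambda>rest. return_pmf (a # y # x # tl rest)))"
      by (rule bind_pmf_cong[OF refl], rule bind_pmf_cong[OF refl]) (auto dest!: refine_set simp: neq_Nil_conv)
    then show ?thesis using Nil by (simp add: map_pmf_def bind_assoc_pmf bind_return_pmf)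
  next
    case (Cons c xs')
    from Cons.IH show ?thesis unfolding Cons
      by (simp add: map_pmf_def bind_assoc_pmf bind_return_pmf)
  qed
qed

lemma trunc_append:
  assumes "xs \<noteq> []" "\<rho> \<le> card (set xs)"
  shows "trunc \<rho> (xs @ ys) = trunc \<rho> xs"
proof -
  let ?Q = "\<lambda>zs k. \<rho> \<le> card (set (take (Suc k) zs))"
  have ex: "?Q xs (length xs - 1)" using assms by simp
  define k0 where "k0 = (LEAST k. ?Q xs k)"
  have q0: "?Q xs k0" unfolding k0_def by (rule LeastI[of "?Q xs", OF ex])
  have k0le: "k0 \<le> length xs - 1" unfolding k0_def by (rule Least_le[of "?Q xs", OF ex])
  have tk: "take (Suc k) (xs @ ys) = take (Suc k) xs" if "k \<le> k0" for k
  proof -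
    from that k0le assms(1) have "Suc k \<le> length xs" by (cases xs) auto
    thus ?thesis by simp
  qed
  have "(LEAST k. ?Q (xs @ ys) k) = k0"
  proof (rule Least_equality)
    show "?Q (xs @ ys) k0" unfolding tk[OF order_refl] by (rule q0)
  next
    fix k assume "?Q (xs @ ys) k"
    show "k0 \<le> k"
    proof (rule ccontr)
      assume "\<not> k0 \<le> k"
      hence "k \<le> k0" by simp
      have "?Q xs k" using \<open>?Q (xs @ ys) k\<close> unfolding tk[OF \<open>k \<le> k0\<close>] .
      hence "k0 \<le> k" unfolding k0_def by (rule Least_le)
      with \<open>\<not> k0 \<le> k\<close> show False by simp
    qed
  qed
  moreover have "\<rho> \<le> card (set (xs @ ys))"
    using assms(2) card_mono[of "set (xs @ ys)" "set xs"] by auto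
  moreover have "Suc k0 \<le> length xs" using k0le assms(1) by (cases xs) auto
  ultimately show ?thesis using assms unfolding trunc_def k0_def[symmetric] tk[OF order_refl] by simp
qed

lemma trunc_refine:
  "map_pmf (trunc \<rho>) (refine P d V) = map_pmf (trunc \<rho>) (refine P d (trunc \<rho> V))"
proof (cases "\<rho> \<le> card (set V) \<and> V \<noteq> []")
  case True
  let ?Q = "\<lambda>k. \<rho> \<le> card (set (take (Suc k) V))"
  define j where "j = (LEAST k. ?Q k)"
  have V: "V \<noteq> []" using True by auto
  hence True: "\<rho> \<le> card (set V)" using True by auto
  have ex: "?Q (length V - 1)" using True V by simp
  have qj: "?Q j" unfolding j_def by (rule LeastI[of ?Q, OF ex])
  have tr: "trunc \<rho> V = take (Suc j) V" using True unfolding trunc_def j_def by simp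
  show ?thesis
  proof (cases "Suc j < length V")
    case False
    then show ?thesis using tr by simp
  next
    case True
    define A where "A = take (Suc j) V"
    have "A \<noteq> []" using V unfolding A_def by simp
    then obtain xs x where A: "A = xs @ [x]" by (metis rev_exhaust)
    have dj: "drop (Suc j) V = drop (Suc j) V" ..
    define ys where "ys = drop (Suc j) V"
    have VV: "V = xs @ x # ys"
    proof -
      have "xs @ x # ys = A @ ys" unfolding A by simp
      also have "\<dots> = V" unfolding A_def ys_def by (rule append_take_drop_id)
      finally show ?thesis by (rule sym)
    qed
    have "map_pmf (trunc \<rho>) (refine P d V) =
        bind_pmf (refine P d A) (\<lambda>R. map_pmf (\<lambda>R'. trunc \<rho> (R @ tl R')) (refine P d (x # ys)))"
      unfolding VV by (subst refine_split) (simp add: A map_bind_pmf pmf.map_comp o_def)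
    also have "\<dots> = bind_pmf (refine P d A) (\<lambda>R. map_pmf (\<lambda>R'. trunc \<rho> R) (refine P d (x # ys)))"
    proof (rule bind_pmf_cong[OF refl], rule map_pmf_cong[OF refl])
      fix R R' assume R: "R \<in> set_pmf (refine P d A)"
      from refine_set[OF R \<open>A \<noteq> []\<close>] have "R \<noteq> []" "set A \<subseteq> set R" by auto
      moreover have "\<rho> \<le> card (set A)" using qj A_def by simp
      ultimately have "\<rho> \<le> card (set R)" using card_mono[of "set R" "set A"] by simp
      then show "trunc \<rho> (R @ tl R') = trunc \<rho> R" using trunc_append \<open>R \<noteq> []\<close> by blast
    qed
    also have "\<dots> = map_pmf (trunc \<rho>) (refine P d A)"
      by (simp add: map_pmf_def bind_return_pmf)
    finally show ?thesis using tr A_def by simp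
  qed
next
  case False
  then show ?thesis by (auto simp add: trunc_def)
qed

lemma samp_refine:
  fixes P :: "'a::finite \<Rightarrow> 'a pmf"
  shows "bind_pmf (samp P (2*e) n w) (refine P (2*e)) = samp P e (2*n) w"
proof (induction n arbitrary: w)
  case 0
  then show ?case by (simp add: bind_return_pmf)
next
  case (Suc n)
  have "bind_pmf (samp P (2*e) (Suc n) w) (refine P (2*e)) =
     bind_pmf (kpow P (2*e) w) (\<lambda>w'. bind_pmf (samp P (2*e) n w') (\<lambda>V. refine P (2*e) (w # V)))"
    by (simp add: map_pmf_def bind_assoc_pmf bind_return_pmf)
  also have "\<dots> = bind_pmf (kpow P (2*e) w) (\<lambda>w'. bind_pmf (samp P (2*e) n w') (\<lambda>V.
        bind_pmf (bridge P (2*e) w w') (\<lambda>y. map_pmf (\<lambda>r. w # y # r) (refine P (2*e) V))))"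
  proof (rule bind_pmf_cong[OF refl], rule bind_pmf_cong[OF refl])
    fix w' V assume "V \<in> set_pmf (samp P (2*e) n w')"
    hence "\<exists>V'. V = w' # V'" by (rule samp_set)
    then obtain V' where V: "V = w' # V'" by blast
    have "refine P (2*e) (w # w' # V') =
        bind_pmf (bridge P (2*e) w w') (\<lambda>y. map_pmf (\<lambda>r. w # y # r) (refine P (2*e) (w' # V')))"
      by (simp add: map_pmf_def)
    then show "refine P (2*e) (w # V) =
        bind_pmf (bridge P (2*e) w w') (\<lambda>y. map_pmf (\<lambda>r. w # y # r) (refine P (2*e) V))"
      using V by simp
  qed
  also have "\<dots> = bind_pmf (kpow P (2*e) w) (\<lambda>w'. bind_pmf (bridge P (2*e) w w') (\<lambda>y.
        map_pmf (\<lambda>r. w # y # r) (bind_pmf (samp P (2*e) n w') (refine P (2*e)))))"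
    by (subst bind_commute_pmf) (simp add: map_bind_pmf)
  also have "\<dots> = bind_pmf (kpow P (2*e) w) (\<lambda>w'. bind_pmf (bridge P (2*e) w w') (\<lambda>y.
        map_pmf (\<lambda>r. w # y # r) (samp P e (2*n) w')))"
    by (simp only: Suc.IH)
  also have "\<dots> = bind_pmf (kpow P e w) (\<lambda>y. bind_pmf (kpow P e y) (\<lambda>w'.
        map_pmf (\<lambda>r. w # y # r) (samp P e (2*n) w')))"
    by (rule bridge_swap[symmetric])
  also have "\<dots> = samp P e (2 * Suc n) w"
    by (simp add: map_pmf_def bind_assoc_pmf bind_return_pmf)
  finally show ?case .
qed

lemma kpow_one: "kpow P (Suc 0) w = P w"
proof -
  have "kpow P 0 = return_pmf" by (rule ext) simp
  then show ?thesis by (simp add: bind_return_pmf')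
qed

lemma samp_traj: "samp P 1 n w = traj P n w"
  by (induction n arbitrary: w) (simp_all del: kpow.simps add: kpow_one)

lemma traj_len: "xs \<in> set_pmf (traj P n w) \<Longrightarrow> length xs = Suc n"
  by (induction n arbitrary: w xs) auto

lemma trunc_tau: "length xs = Suc l \<Longrightarrow> trunc \<rho> xs = take (Suc (tau l \<rho> xs)) xs"
proof -
  assume len: "length xs = Suc l"
  let ?Q = "\<lambda>t. \<rho> \<le> card (set (take (Suc t) xs))"
  show ?thesis
  proof (cases "\<rho> \<le> card (set xs)")
    case True
    have ex: "?Q l" using True len by simp
    have le: "(LEAST t. ?Q t) \<le> l" by (rule Least_le[of ?Q, OF ex])
    have e: "\<exists>t\<le>l. ?Q t" using ex by blast
    have "tau l \<rho> xs = min l (LEAST t. ?Q t)" unfolding tau_def using e by (simp only: if_True)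
    also have "\<dots> = (LEAST t. ?Q t)" using le by (rule min_absorb2)
    finally have t: "tau l \<rho> xs = (LEAST t. ?Q t)" .
    have "trunc \<rho> xs = take (Suc (LEAST t. ?Q t)) xs" unfolding trunc_def using True by (simp only: if_True)
    then show ?thesis unfolding t .
  next
    case False
    have "\<not> (\<exists>t\<le>l. ?Q t)"
    proof
      assume "\<exists>t\<le>l. ?Q t"
      then obtain t where "?Q t" by blast
      moreover have "card (set (take (Suc t) xs)) \<le> card (set xs)"
        by (rule card_mono) (auto dest: in_set_takeD)
      ultimately show False using False by simp
    qed
    hence "tau l \<rho> xs = l" unfolding tau_def by (simp only: if_False)
    moreover have "trunc \<rho> xs = xs" unfolding trunc_def using False by (simp only: if_False)
    ultimately show ?thesis using len by simp
  qed
qed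

theorem mainTheorem6:
  fixes P :: "'a::finite \<Rightarrow> 'a pmf" and L \<rho> :: nat and w0 :: 'a
  assumes "\<rho> \<ge> 1"
  shows "alg P \<rho> L w0 L =
         map_pmf (\<lambda>xs. take (Suc (tau (2 ^ L) \<rho> xs)) xs) (traj P (2 ^ L) w0)"
proof -
  have key: "k \<le> L \<Longrightarrow> alg P \<rho> L w0 k = map_pmf (trunc \<rho>) (samp P (2 ^ L div 2 ^ k) (2 ^ k) w0)" for k
  proof (induction k)
    case 0
    then show ?case by (simp add: map_pmf_def bind_assoc_pmf bind_return_pmf)
  next
    case (Suc k)
    define e :: nat where "e = 2 ^ L div 2 ^ Suc k"
    have d1: "2 ^ L div 2 ^ k = (2::nat) ^ (L - k)" using Suc.prems by (simp add: power_diff)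
    have d2: "e = (2::nat) ^ (L - Suc k)" using Suc.prems unfolding e_def by (simp add: power_diff)
    have "L - k = Suc (L - Suc k)" using Suc.prems by simp
    hence d: "2 ^ L div 2 ^ k = 2 * e" using d1 d2 by simp
    have "alg P \<rho> L w0 (Suc k) = bind_pmf (samp P (2*e) (2 ^ k) w0)
         (\<lambda>V. map_pmf (trunc \<rho>) (refine P (2*e) (trunc \<rho> V)))"
      using Suc by (simp add: d map_pmf_def bind_assoc_pmf bind_return_pmf)
    also have "\<dots> = bind_pmf (samp P (2*e) (2 ^ k) w0) (\<lambda>V. map_pmf (trunc \<rho>) (refine P (2*e) V))"
      by (simp only: trunc_refine[symmetric])
    also have "\<dots> = map_pmf (trunc \<rho>) (samp P e (2 * 2 ^ k) w0)"
      by (simp add: map_bind_pmf samp_refine[symmetric])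
    finally show ?case by (simp add: e_def)
  qed
  have "alg P \<rho> L w0 L = map_pmf (trunc \<rho>) (traj P (2 ^ L) w0)"
    using key[of L] samp_traj[of P "2 ^ L" w0] by simp
  also have "\<dots> = map_pmf (\<lambda>xs. take (Suc (tau (2 ^ L) \<rho> xs)) xs) (traj P (2 ^ L) w0)"
    by (rule map_pmf_cong[OF refl]) (simp add: trunc_tau traj_len)
  finally show ?thesis .
qed

end
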